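(* Let $n\in\mathbb{Z}^+$ with $n>0$. Then $$\binom{2n}{n} = \left((4^n+1)^{2n}\bmod (4^{n(n+1)}+1)\right)\bmod (4^n-1).$$
   Context: For integers, $u\bmod m$ denotes the least non-negative remainder of $u$ upon division by $m>0$. *)

theory Defs
  imports Main
begin

end

theory Submission
  imports Defs
begin

lemma sum_split_add: "(\<Sum>k<a+m. f k) = (\<Sum>k<a. f k) + (\<Sum>j<m. f (a+j))"
  for f :: "nat \<Rightarrow> 'a::comm_monoid_add"
  by (induction m) (auto simp: add.assoc)

lemma digit_bound:
  fixes x :: int
  assumes "\<forall>j<n. 0 \<le> c j \<and> c j \<le> x - 1" "x \<ge> 1"
  shows "(\<Sum>j<n. c j * x^j) \<le> x^n - 1"
  using assms(1)
proof (induction n)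
  case 0 then show ?case by simp
next
  case (Suc n)
  have "(\<Sum>j<Suc n. c j * x^j) = (\<Sum>j<n. c j * x^j) + c n * x^n" by simp
  also have "\<dots> \<le> (x^n - 1) + (x - 1) * x^n"
    using Suc assms(2) by (intro add_mono mult_right_mono) auto
  also have "\<dots> = x^Suc n - 1" by (simp add: algebra_simps)
  finally show ?case .
qed

lemma sum_nonneg_int:
  fixes x :: int
  assumes "\<forall>j<n. 0 \<le> c j" "x \<ge> 0"
  shows "0 \<le> (\<Sum>j<n. c j * x^j)"
  using assms by (intro sum_nonneg) auto

lemma dvd_pow_minus1: "(x - 1) dvd (x^j - (1::int))"
proof (induction j)
  case 0 then show ?case by simp
next
  case (Suc j)
  have e: "x^Suc j - 1 = x * (x^j - 1) + (x - 1)" by (simp add: algebra_simps)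
  show ?case by (subst e) (rule dvd_add[OF dvd_mult[OF Suc.IH] dvd_refl])
qed

lemma int_version:
  fixes n :: nat
  assumes "n > 0"
  defines "x \<equiv> (4::int)^n"
  shows "((x + 1)^(2*n) mod (x^(n+1) + 1)) mod (x - 1) = int ((2*n) choose n)"
proof -
  define c where "c k = int ((2*n) choose k)" for k
  define A where "A = (\<Sum>j<n+1. c j * x^j)"
  define Q where "Q = (\<Sum>j<n. c (n+1+j) * x^j)"
  define R where "R = A - Q"
  have x1: "x \<ge> 4" unfolding x_def using assms
    using power_increasing[of 1 n "4::int"] by simp
  have rowsum: "(\<Sum>k\<le>2*n. (2*n) choose k) = 4^n"
    using choose_row_sum[of "2*n"] by (simp add: power_mult)
  have cb: "((2*n) choose k) + 2 \<le> 4^n" if k: "0 < k" "k < 2*n" for k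
  proof -
    have sub: "{0, k, 2*n} \<subseteq> {..2*n}" using k by auto
    have "(\<Sum>k\<in>{0,k,2*n}. (2*n) choose k) \<le> (\<Sum>k\<le>2*n. (2*n) choose k)"
      by (rule sum_mono2[OF _ sub]) auto
    moreover have "(\<Sum>k\<in>{0,k,2*n}. (2*n) choose k) = ((2*n) choose k) + 2"
      using k by simp
    ultimately show ?thesis using rowsum by simp
  qed
  have cb_int: "c k + 2 \<le> x" if k: "0 < k" "k < 2*n" for k
  proof -
    have "int (((2*n) choose k) + 2) \<le> int (4^n)" using cb[OF k] by linarith
    then show ?thesis unfolding c_def x_def by simp
  qed
  have cn_int: "c n + 2 \<le> x" using cb_int assms by simp
  have c_ok: "0 \<le> c k \<and> c k \<le> x - 1" for k
  proof (cases "0 < k \<and> k < 2*n")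
    case True then show ?thesis using cb_int[of k] unfolding c_def by simp
  next
    case False
    then have "k = 0 \<or> k = 2*n \<or> k > 2*n" by auto
    then have "c k \<le> 1" unfolding c_def by (auto simp: binomial_eq_0)
    then show ?thesis using x1 unfolding c_def by simp
  qed
  have "(x + 1)^(2*n) = (\<Sum>k\<le>2*n. c k * x^k)"
    using binomial_ring[of x 1 "2*n"] unfolding c_def by simp
  also have "\<dots> = (\<Sum>k<(n+1)+n. c k * x^k)"
    by (simp add: lessThan_Suc_atMost[symmetric] mult_2)
  also have "\<dots> = A + (\<Sum>j<n. c (n+1+j) * x^(n+1+j))"
    unfolding A_def by (rule sum_split_add)
  also have "(\<Sum>j<n. c (n+1+j) * x^(n+1+j)) = x^(n+1) * Q"
    unfolding Q_def by (simp add: sum_distrib_left power_add algebra_simps)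
  finally have exp: "(x + 1)^(2*n) = R + (x^(n+1) + 1) * Q"
    unfolding R_def by (simp add: algebra_simps)
  have A_split: "A = c n * x^n + (\<Sum>j<n. c j * x^j)"
    unfolding A_def by simp
  have Q_le: "Q \<le> x^n - 1" unfolding Q_def
    using c_ok x1 by (intro digit_bound) auto
  have Q_ge: "0 \<le> Q" unfolding Q_def using c_ok x1 by (intro sum_nonneg_int) auto
  have S_le: "(\<Sum>j<n. c j * x^j) \<le> x^n - 1"
    using c_ok x1 by (intro digit_bound) auto
  have S_ge: "0 \<le> (\<Sum>j<n. c j * x^j)" using c_ok x1 by (intro sum_nonneg_int) auto
  have "0 < (2*n) choose n" by (rule zero_less_binomial) simp
  then have cn1: "c n \<ge> 1" unfolding c_def by linarith
  have xn: "x^n \<ge> 1" using x1 by simp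
  have R_ge: "0 \<le> R"
  proof -
    have "c n * x^n \<ge> 1 * x^n" using cn1 xn by (intro mult_right_mono) auto
    then show ?thesis unfolding R_def A_split using Q_le S_ge by linarith
  qed
  have R_lt: "R < x^(n+1) + 1"
  proof -
    have "c n * x^n \<le> (x - 2) * x^n" using cn_int xn by (intro mult_right_mono) auto
    then have "A \<le> (x - 2) * x^n + x^n - 1" unfolding A_split using S_le by linarith
    also have "\<dots> = x^(n+1) - x^n - 1" by (simp add: algebra_simps)
    finally show ?thesis unfolding R_def using Q_ge xn by linarith
  qed
  have modM: "(x + 1)^(2*n) mod (x^(n+1) + 1) = R"
    unfolding exp using R_ge R_lt by simp
  have symsum: "(\<Sum>j<n. c (n+1+j)) = (\<Sum>j<n. c j)"
  proof -
    have "(\<Sum>j<n. c (n+1+j)) = (\<Sum>j<n. c (n - Suc j))"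
    proof (intro sum.cong refl)
      fix j assume "j \<in> {..<n}"
      then have j: "j < n" by simp
      have "(2*n) choose (n+1+j) = (2*n) choose (2*n - (n+1+j))"
        using j by (intro binomial_symmetric) simp
      moreover have "2*n - (n+1+j) = n - Suc j" using j by simp
      ultimately show "c (n+1+j) = c (n - Suc j)" unfolding c_def by simp
    qed
    also have "\<dots> = (\<Sum>j<n. c j)" by (rule sum.nat_diff_reindex)
    finally show ?thesis .
  qed
  have d1: "(x - 1) dvd (A - (\<Sum>j<n+1. c j))"
  proof -
    have "A - (\<Sum>j<n+1. c j) = (\<Sum>j<n+1. c j * (x^j - 1))"
      unfolding A_def by (simp add: sum_subtractf algebra_simps)
    then show ?thesis by (simp add: dvd_sum dvd_pow_minus1)
  qed
  have d2: "(x - 1) dvd (Q - (\<Sum>j<n. c (n+1+j)))"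
  proof -
    have "Q - (\<Sum>j<n. c (n+1+j)) = (\<Sum>j<n. c (n+1+j) * (x^j - 1))"
      unfolding Q_def by (simp add: sum_subtractf algebra_simps)
    then show ?thesis by (simp add: dvd_sum dvd_pow_minus1)
  qed
  have eqR: "R - c n = (A - (\<Sum>j<n+1. c j)) - (Q - (\<Sum>j<n. c (n+1+j)))"
    unfolding R_def using symsum by simp
  have "(x - 1) dvd (R - c n)" unfolding eqR by (rule dvd_diff[OF d1 d2])
  then have "R mod (x - 1) = c n mod (x - 1)"
    by (simp add: mod_eq_dvd_iff)
  also have "\<dots> = c n" using c_ok[of n] cn_int by simp
  finally show ?thesis using modM unfolding c_def by simp
qed

theorem theorem5p1:
  fixes n :: nat
  assumes "n > 0"
  shows "(2 * n) choose n = (((4::nat) ^ n + 1) ^ (2 * n) mod (4 ^ (n * (n + 1)) + 1)) mod (4 ^ n - 1)"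
proof -
  have p: "(4::nat) ^ (n * (n + 1)) = (4^n)^(n+1)" by (rule power_mult)
  have ge: "(4::nat)^n \<ge> 1" by simp
  have "int (((4::nat) ^ n + 1) ^ (2 * n) mod (4 ^ (n * (n + 1)) + 1) mod (4 ^ n - 1))
     = (((4::int) ^ n + 1) ^ (2 * n) mod ((4^n)^(n+1) + 1)) mod (4 ^ n - 1)"
    using ge unfolding p by (simp add: zmod_int of_nat_diff add.commute)
  also have "\<dots> = int ((2*n) choose n)" using int_version[OF assms] by simp
  finally show ?thesis by simp
qed

end
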